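(* Let $Q\in\mathbb{C}^\times$ and let $\alpha_0,\alpha_1,\alpha_2$ be nonzero complex parameters with $\alpha_0\alpha_1\alpha_2=Q$; indices of $\alpha_i,\tau_i,\overline{\tau}_i,T_i$ are read modulo $3$ (so index $3$ means index $0$). Let $\tau_i,\overline{\tau}_i$ ($i\in\mathbb{Z}/3\mathbb{Z}$) be functions of the parameters, and let the translations $T_1,T_2,T_3$ act on the parameters by $T_1:(\alpha_0,\alpha_1,\alpha_2)\mapsto(Q\alpha_0,Q^{-1}\alpha_1,\alpha_2)$, $T_2:(\alpha_0,\alpha_1,\alpha_2)\mapsto(\alpha_0,Q\alpha_1,Q^{-1}\alpha_2)$, $T_3:(\alpha_0,\alpha_1,\alpha_2)\mapsto(Q^{-1}\alpha_0,\alpha_1,Q\alpha_2)$, and on functions $F$ of the parameters by $T_j(F)(\alpha)=F(T_j(\alpha))$. Suppose that for each $i=1,2,3$ the following identities hold: \[T_i(\tau_{i-1})=\tau_i,\qquad T_i(\overline{\tau}_{i-1})=\overline{\tau}_i,\] \[T_i(\tau_{i+1})=\frac{\alpha_{i-1}^6\tau_i\overline{\tau}_{i+1}+Q^2\overline{\tau}_i\tau_{i+1}}{Q\alpha_{i-1}^3\overline{\tau}_{i-1}},\qquad T_i(\overline{\tau}_{i+1})=\frac{Q^2\alpha_{i-1}^6\tau_{i+1}\overline{\tau}_i+\overline{\tau}_{i+1}\tau_i}{Q\alpha_{i-1}^3\tau_{i-1}}.\] Then for each $i=1,2,3$ the following identities also hold: \[T_i(\tau_i)=\frac{1}{\alpha_{i+1}^3\alpha_{i-1}^6}\frac{\tau_i^2}{\tau_{i-1}}+\frac{\alpha_{i+1}\alpha_{i-1}^4}{\alpha_i^2}\frac{\tau_i\overline{\tau}_i}{\overline{\tau}_{i-1}}+\frac{\alpha_i^2\alpha_{i-1}^2}{\alpha_{i+1}}\frac{\overline{\tau}_i\tau_i\tau_{i+1}}{\overline{\tau}_{i+1}\tau_{i-1}}+\alpha_{i+1}^3\frac{\overline{\tau}_i^2\tau_{i+1}}{\overline{\tau}_{i+1}\overline{\tau}_{i-1}},\]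 \[T_i(\overline{\tau}_i)=\frac{1}{\alpha_{i+1}^3\alpha_{i-1}^6}\frac{\overline{\tau}_i^2}{\overline{\tau}_{i-1}}+\alpha_i^2\alpha_{i+1}^5\alpha_{i-1}^8\frac{\tau_i\overline{\tau}_i}{\tau_{i-1}}+\frac{1}{\alpha_i^2\alpha_{i+1}^5\alpha_{i-1}^2}\frac{\tau_i\overline{\tau}_i\overline{\tau}_{i+1}}{\tau_{i+1}\overline{\tau}_{i-1}}+\alpha_{i+1}^3\frac{\tau_i^2\overline{\tau}_{i+1}}{\tau_{i+1}\tau_{i-1}}.\]
   Context: This arises in the $\tau$-function formulation of the $q$-Painlevé III equation with affine Weyl group symmetry of type $(A_2+A_1)^{(1)}$: $q=Q^6$, $a_i=\alpha_i^6$ with $a_0a_1a_2=q$, and the translations are $T_1=\pi s_2s_1$, $T_2=s_1\pi s_2$, $T_3=s_2s_1\pi$, which commute and satisfy $T_1T_2T_3=1$. The identities are understood as identities of functions of the parameters (coefficients are evaluated at the unshifted parameters). *)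

theory Defs
  imports Complex_Main
begin

type_synonym param = "complex \<times> complex \<times> complex"

definition alpha :: "param \<Rightarrow> nat \<Rightarrow> complex" where
  "alpha p k = (case p of (a0, a1, a2) \<Rightarrow>
      (if k mod 3 = 0 then a0 else if k mod 3 = 1 then a1 else a2))"

definition PD :: "complex \<Rightarrow> param set" where
  "PD Q = {(a0, a1, a2). a0 \<noteq> 0 \<and> a1 \<noteq> 0 \<and> a2 \<noteq> 0 \<and> a0 * a1 * a2 = Q}"

definition Tr :: "complex \<Rightarrow> nat \<Rightarrow> param \<Rightarrow> param" where
  "Tr Q j p = (case p of (a0, a1, a2) \<Rightarrow>
      (if j mod 3 = 1 then (Q * a0, a1 / Q, a2)
       else if j mod 3 = 2 then (a0, Q * a1, a2 / Q)
       else (a0 / Q, a1, Q * a2)))"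

end

theory Submission
  imports Defs
begin

lemma core:
  fixes Q a b c u v w ub vb wb X Xb C D :: complex
  assumes nz: "a\<noteq>0" "b\<noteq>0" "c\<noteq>0" "u\<noteq>0" "v\<noteq>0" "w\<noteq>0" "ub\<noteq>0" "vb\<noteq>0" "wb\<noteq>0" "X\<noteq>0" "Xb\<noteq>0"
  and hQ: "Q = a*b*c"
  and hC: "C = (c^6 * u * vb + Q^2 * ub * v) / (Q * c^3 * wb)"
  and hD: "D = (Q^2 * c^6 * v * ub + vb * u) / (Q * c^3 * w)"
  and hE: "v = ((a/Q)^6 * C * ub + Q^2 * D * u) / (Q * (a/Q)^3 * Xb)"
  and hF: "vb = (Q^2 * (a/Q)^6 * u * D + ub * C) / (Q * (a/Q)^3 * X)"
  shows "X = 1 / (b^3 * c^6) * (u^2 / w) + (b * c^4 / a^2) * (u * ub / wb)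
           + (a^2 * c^2 / b) * (ub * u * v / (vb * w)) + b^3 * (ub^2 * v / (vb * wb))
     \<and> Xb = 1 / (b^3 * c^6) * (ub^2 / wb) + a^2 * b^5 * c^8 * (u * ub / w)
           + 1 / (a^2 * b^5 * c^2) * (u * ub * vb / (v * wb)) + b^3 * (u^2 * vb / (v * w))"
proof -
  have Q0: "Q \<noteq> 0" using nz hQ by simp
  have X: "X = (Q^2 * (a/Q)^6 * u * D + ub * C) / (Q * (a/Q)^3 * vb)"
    using hF nz Q0 by (simp add: field_simps)
  have Xb: "Xb = ((a/Q)^6 * C * ub + Q^2 * D * u) / (Q * (a/Q)^3 * v)"
    using hE nz Q0 by (simp add: field_simps)
  have aQ: "a/Q = 1/(b*c)" using nz hQ by (simp add: field_simps)
  show ?thesis unfolding X Xb aQ hC hD unfolding hQ using nz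
    apply (intro conjI)
    apply (simp add: field_simps)
    apply algebra
    apply (simp add: field_simps)
    apply algebra
    done
qed



theorem lemma3p2:
  fixes Q :: complex and tau taub :: "nat \<Rightarrow> param \<Rightarrow> complex"
  assumes hQ: "Q \<noteq> 0"
    and nz: "\<And>p k. p \<in> PD Q \<Longrightarrow> k < 3 \<Longrightarrow> tau k p \<noteq> 0 \<and> taub k p \<noteq> 0"
    and h1: "\<And>i p. i \<in> {1, 2, 3} \<Longrightarrow> p \<in> PD Q \<Longrightarrow>
               tau ((i + 2) mod 3) (Tr Q i p) = tau (i mod 3) p"
    and h2: "\<And>i p. i \<in> {1, 2, 3} \<Longrightarrow> p \<in> PD Q \<Longrightarrow>
               taub ((i + 2) mod 3) (Tr Q i p) = taub (i mod 3) p"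
    and h3: "\<And>i p. i \<in> {1, 2, 3} \<Longrightarrow> p \<in> PD Q \<Longrightarrow>
               tau ((i + 1) mod 3) (Tr Q i p) =
                 (alpha p (i + 2) ^ 6 * tau (i mod 3) p * taub ((i + 1) mod 3) p
                  + Q ^ 2 * taub (i mod 3) p * tau ((i + 1) mod 3) p)
                 / (Q * alpha p (i + 2) ^ 3 * taub ((i + 2) mod 3) p)"
    and h4: "\<And>i p. i \<in> {1, 2, 3} \<Longrightarrow> p \<in> PD Q \<Longrightarrow>
               taub ((i + 1) mod 3) (Tr Q i p) =
                 (Q ^ 2 * alpha p (i + 2) ^ 6 * tau ((i + 1) mod 3) p * taub (i mod 3) p
                  + taub ((i + 1) mod 3) p * tau (i mod 3) p)
                 / (Q * alpha p (i + 2) ^ 3 * tau ((i + 2) mod 3) p)"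
    and i: "i \<in> {1, 2, 3}" and p: "p \<in> PD Q"
  shows "tau (i mod 3) (Tr Q i p) =
           1 / (alpha p (i + 1) ^ 3 * alpha p (i + 2) ^ 6)
             * (tau (i mod 3) p ^ 2 / tau ((i + 2) mod 3) p)
         + (alpha p (i + 1) * alpha p (i + 2) ^ 4 / alpha p i ^ 2)
             * (tau (i mod 3) p * taub (i mod 3) p / taub ((i + 2) mod 3) p)
         + (alpha p i ^ 2 * alpha p (i + 2) ^ 2 / alpha p (i + 1))
             * (taub (i mod 3) p * tau (i mod 3) p * tau ((i + 1) mod 3) p
                / (taub ((i + 1) mod 3) p * tau ((i + 2) mod 3) p))
         + alpha p (i + 1) ^ 3
             * (taub (i mod 3) p ^ 2 * tau ((i + 1) mod 3) p
                / (taub ((i + 1) mod 3) p * taub ((i + 2) mod 3) p))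
       \<and> taub (i mod 3) (Tr Q i p) =
           1 / (alpha p (i + 1) ^ 3 * alpha p (i + 2) ^ 6)
             * (taub (i mod 3) p ^ 2 / taub ((i + 2) mod 3) p)
         + alpha p i ^ 2 * alpha p (i + 1) ^ 5 * alpha p (i + 2) ^ 8
             * (tau (i mod 3) p * taub (i mod 3) p / tau ((i + 2) mod 3) p)
         + 1 / (alpha p i ^ 2 * alpha p (i + 1) ^ 5 * alpha p (i + 2) ^ 2)
             * (tau (i mod 3) p * taub (i mod 3) p * taub ((i + 1) mod 3) p
                / (tau ((i + 1) mod 3) p * taub ((i + 2) mod 3) p))
         + alpha p (i + 1) ^ 3
             * (tau (i mod 3) p ^ 2 * taub ((i + 1) mod 3) p
                / (tau ((i + 1) mod 3) p * tau ((i + 2) mod 3) p))"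
  proof -
  obtain a0 a1 a2 where pp: "p = (a0, a1, a2)" by (cases p)

  have case1: "?thesis" if ii: "i = 1"
  proof -
    define x where "x = (Q*a0, a1/Q, a2)"
    define y where "y = (Q*a0, a1, a2/Q)"
    have tx: "Tr Q 1 p = x" by (simp add: pp x_def Tr_def)
    have ty: "Tr Q 2 x = y" using hQ by (simp add: x_def y_def Tr_def)
    have tp: "Tr Q 3 y = p" using hQ by (simp add: pp y_def Tr_def)
    have xP: "x \<in> PD Q" using p hQ by (auto simp: pp x_def PD_def field_simps)
    have yP: "y \<in> PD Q" using p hQ by (auto simp: pp y_def PD_def field_simps)
    have ax: "\<And>n. alpha x n = (case x of (b0,b1,b2) \<Rightarrow> (if n mod 3 = 0 then b0 else if n mod 3 = 1 then b1 else b2))"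
      by (simp add: alpha_def)
    have aX: "alpha x 4 = a1/Q" by (simp add: x_def alpha_def)
    note F = h1[of 1 p] h2[of 1 p] h3[of 1 p] h4[of 1 p] h3[of 2 x] h4[of 2 x] h1[of 3 y] h2[of 3 y]
    note N = nz[OF p, of 0] nz[OF p, of 1] nz[OF p, of 2] nz[OF xP, of 1]
    have R: "(tau 1 x) = 1 / ((a2)^3 * (a0)^6) * ((tau 1 p)^2 / (tau 0 p)) + ((a2) * (a0)^4 / (a1)^2) * ((tau 1 p) * (taub 1 p) / (taub 0 p))
           + ((a1)^2 * (a0)^2 / (a2)) * ((taub 1 p) * (tau 1 p) * (tau 2 p) / ((taub 2 p) * (tau 0 p))) + (a2)^3 * ((taub 1 p)^2 * (tau 2 p) / ((taub 2 p) * (taub 0 p)))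
     \<and> (taub 1 x) = 1 / ((a2)^3 * (a0)^6) * ((taub 1 p)^2 / (taub 0 p)) + (a1)^2 * (a2)^5 * (a0)^8 * ((tau 1 p) * (taub 1 p) / (tau 0 p))
           + 1 / ((a1)^2 * (a2)^5 * (a0)^2) * ((tau 1 p) * (taub 1 p) * (taub 2 p) / ((tau 2 p) * (taub 0 p))) + (a2)^3 * ((tau 1 p)^2 * (taub 2 p) / ((tau 2 p) * (tau 0 p)))"
      apply (rule core[of a1 a2 a0 "tau 1 p" "tau 2 p" "tau 0 p" "taub 1 p" "taub 2 p" "taub 0 p"
         "tau 1 x" "taub 1 x" Q "tau 2 x" "taub 2 x"])
                  subgoal using p by (simp add: pp PD_def)
                  subgoal using p by (simp add: pp PD_def)
                  subgoal using p by (simp add: pp PD_def)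
                  subgoal using N by simp
                  subgoal using N by simp
                  subgoal using N by simp
                  subgoal using N by simp
                  subgoal using N by simp
                  subgoal using N by simp
                  subgoal using N by simp
                  subgoal using N by simp
      subgoal using p by (simp add: pp PD_def mult_ac)
      subgoal using h3[of 1 p] p tx by (simp add: pp alpha_def numeral_2_eq_2)
      subgoal using h4[of 1 p] p tx by (simp add: pp alpha_def numeral_2_eq_2)
      subgoal using h3[of 2 x] h1[of 3 y] h1[of 1 p] h2[of 1 p] xP yP p tx ty tp aX by (simp add: numeral_2_eq_2 alpha_def x_def)
      subgoal using h4[of 2 x] h2[of 3 y] h1[of 1 p] h2[of 1 p] xP yP p tx ty tp aX by (simp add: numeral_2_eq_2 alpha_def x_def)
      done
    show ?thesis using R ii tx by (simp add: pp alpha_def numeral_2_eq_2)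
  qed

  have case2: "?thesis" if ii: "i = 2"
  proof -
    define x where "x = (a0, Q*a1, a2/Q)"
    define y where "y = (a0/Q, Q*a1, a2)"
    have tx: "Tr Q 2 p = x" by (simp add: pp x_def Tr_def)
    have ty: "Tr Q 3 x = y" using hQ by (simp add: x_def y_def Tr_def)
    have tp: "Tr Q 1 y = p" using hQ by (simp add: pp y_def Tr_def)
    have xP: "x \<in> PD Q" using p hQ by (auto simp: pp x_def PD_def field_simps)
    have yP: "y \<in> PD Q" using p hQ by (auto simp: pp y_def PD_def field_simps)
    have ax: "\<And>n. alpha x n = (case x of (b0,b1,b2) \<Rightarrow> (if n mod 3 = 0 then b0 else if n mod 3 = 1 then b1 else b2))"
      by (simp add: alpha_def)
    have aX: "alpha x 5 = a2/Q" by (simp add: x_def alpha_def)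
    note F = h1[of 2 p] h2[of 2 p] h3[of 2 p] h4[of 2 p] h3[of 3 x] h4[of 3 x] h1[of 1 y] h2[of 1 y]
    note N = nz[OF p, of 0] nz[OF p, of 1] nz[OF p, of 2] nz[OF xP, of 2]
    have R: "(tau 2 x) = 1 / ((a0)^3 * (a1)^6) * ((tau 2 p)^2 / (tau 1 p)) + ((a0) * (a1)^4 / (a2)^2) * ((tau 2 p) * (taub 2 p) / (taub 1 p))
           + ((a2)^2 * (a1)^2 / (a0)) * ((taub 2 p) * (tau 2 p) * (tau 0 p) / ((taub 0 p) * (tau 1 p))) + (a0)^3 * ((taub 2 p)^2 * (tau 0 p) / ((taub 0 p) * (taub 1 p)))
     \<and> (taub 2 x) = 1 / ((a0)^3 * (a1)^6) * ((taub 2 p)^2 / (taub 1 p)) + (a2)^2 * (a0)^5 * (a1)^8 * ((tau 2 p) * (taub 2 p) / (tau 1 p))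
           + 1 / ((a2)^2 * (a0)^5 * (a1)^2) * ((tau 2 p) * (taub 2 p) * (taub 0 p) / ((tau 0 p) * (taub 1 p))) + (a0)^3 * ((tau 2 p)^2 * (taub 0 p) / ((tau 0 p) * (tau 1 p)))"
      apply (rule core[of a2 a0 a1 "tau 2 p" "tau 0 p" "tau 1 p" "taub 2 p" "taub 0 p" "taub 1 p"
         "tau 2 x" "taub 2 x" Q "tau 0 x" "taub 0 x"])
                  subgoal using p by (simp add: pp PD_def)
                  subgoal using p by (simp add: pp PD_def)
                  subgoal using p by (simp add: pp PD_def)
                  subgoal using N by simp
                  subgoal using N by simp
                  subgoal using N by simp
                  subgoal using N by simp
                  subgoal using N by simp
                  subgoal using N by simp
                  subgoal using N by simp
                  subgoal using N by simp
      subgoal using p by (simp add: pp PD_def mult_ac)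
      subgoal using h3[of 2 p] p tx by (simp add: pp alpha_def numeral_2_eq_2)
      subgoal using h4[of 2 p] p tx by (simp add: pp alpha_def numeral_2_eq_2)
      subgoal using h3[of 3 x] h1[of 1 y] h1[of 2 p] h2[of 2 p] xP yP p tx ty tp aX by (simp add: numeral_2_eq_2 alpha_def x_def)
      subgoal using h4[of 3 x] h2[of 1 y] h1[of 2 p] h2[of 2 p] xP yP p tx ty tp aX by (simp add: numeral_2_eq_2 alpha_def x_def)
      done
    show ?thesis using R ii tx by (simp add: pp alpha_def numeral_2_eq_2)
  qed

  have case3: "?thesis" if ii: "i = 3"
  proof -
    define x where "x = (a0/Q, a1, Q*a2)"
    define y where "y = (a0, a1/Q, Q*a2)"
    have tx: "Tr Q 3 p = x" by (simp add: pp x_def Tr_def)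
    have ty: "Tr Q 1 x = y" using hQ by (simp add: x_def y_def Tr_def)
    have tp: "Tr Q 2 y = p" using hQ by (simp add: pp y_def Tr_def)
    have xP: "x \<in> PD Q" using p hQ by (auto simp: pp x_def PD_def field_simps)
    have yP: "y \<in> PD Q" using p hQ by (auto simp: pp y_def PD_def field_simps)
    have ax: "\<And>n. alpha x n = (case x of (b0,b1,b2) \<Rightarrow> (if n mod 3 = 0 then b0 else if n mod 3 = 1 then b1 else b2))"
      by (simp add: alpha_def)
    have aX: "alpha x 3 = a0/Q" by (simp add: x_def alpha_def)
    note F = h1[of 3 p] h2[of 3 p] h3[of 3 p] h4[of 3 p] h3[of 1 x] h4[of 1 x] h1[of 2 y] h2[of 2 y]
    note N = nz[OF p, of 0] nz[OF p, of 1] nz[OF p, of 2] nz[OF xP, of 0]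
    have R: "(tau 0 x) = 1 / ((a1)^3 * (a2)^6) * ((tau 0 p)^2 / (tau 2 p)) + ((a1) * (a2)^4 / (a0)^2) * ((tau 0 p) * (taub 0 p) / (taub 2 p))
           + ((a0)^2 * (a2)^2 / (a1)) * ((taub 0 p) * (tau 0 p) * (tau 1 p) / ((taub 1 p) * (tau 2 p))) + (a1)^3 * ((taub 0 p)^2 * (tau 1 p) / ((taub 1 p) * (taub 2 p)))
     \<and> (taub 0 x) = 1 / ((a1)^3 * (a2)^6) * ((taub 0 p)^2 / (taub 2 p)) + (a0)^2 * (a1)^5 * (a2)^8 * ((tau 0 p) * (taub 0 p) / (tau 2 p))
           + 1 / ((a0)^2 * (a1)^5 * (a2)^2) * ((tau 0 p) * (taub 0 p) * (taub 1 p) / ((tau 1 p) * (taub 2 p))) + (a1)^3 * ((tau 0 p)^2 * (taub 1 p) / ((tau 1 p) * (tau 2 p)))"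
      apply (rule core[of a0 a1 a2 "tau 0 p" "tau 1 p" "tau 2 p" "taub 0 p" "taub 1 p" "taub 2 p"
         "tau 0 x" "taub 0 x" Q "tau 1 x" "taub 1 x"])
                  subgoal using p by (simp add: pp PD_def)
                  subgoal using p by (simp add: pp PD_def)
                  subgoal using p by (simp add: pp PD_def)
                  subgoal using N by simp
                  subgoal using N by simp
                  subgoal using N by simp
                  subgoal using N by simp
                  subgoal using N by simp
                  subgoal using N by simp
                  subgoal using N by simp
                  subgoal using N by simp
      subgoal using p by (simp add: pp PD_def mult_ac)
      subgoal using h3[of 3 p] p tx by (simp add: pp alpha_def numeral_2_eq_2)
      subgoal using h4[of 3 p] p tx by (simp add: pp alpha_def numeral_2_eq_2)
      subgoal using h3[of 1 x] h1[of 2 y] h1[of 3 p] h2[of 3 p] xP yP p tx ty tp aX by (simp add: numeral_2_eq_2 alpha_def x_def)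
      subgoal using h4[of 1 x] h2[of 2 y] h1[of 3 p] h2[of 3 p] xP yP p tx ty tp aX by (simp add: numeral_2_eq_2 alpha_def x_def)
      done
    show ?thesis using R ii tx by (simp add: pp alpha_def numeral_2_eq_2)
  qed

  show ?thesis using i case1 case2 case3 by auto
qed

end
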